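(* Let $\mathbf{A}\in\mathbb{R}^{M\times N}$, $\mathbf{Y}\in\mathbb{R}^{M\times L}$, and let $\mathcal{S}_K=\{s_1<s_2<\dots<s_K\}\subseteq[N]$ with $K=|\mathcal{S}_K|\le N$. Let $\bar{\mathbf{A}}\in\mathbb{R}^{M\times K}$ be the submatrix of $\mathbf{A}$ consisting of the columns indexed by $\mathcal{S}_K$ (in this order). Let $(\bar{\mathbf{g}}(t),\bar{\mathbf{V}}(t))\in\mathbb{R}^K\times\mathbb{R}^{K\times L}$ follow the gradient flow of $\mathcal{L}_K(\bar{\mathbf{g}},\bar{\mathbf{V}})=\Vert\mathbf{Y}-\bar{\mathbf{A}}((\bar{\mathbf{g}}^{\odot2}\mathbf{1}_L)\odot\bar{\mathbf{V}})\Vert_F^2$. Define $\tilde{\mathbf{g}}(t)\in\mathbb{R}^N$ and $\tilde{\mathbf{V}}(t)\in\mathbb{R}^{N\times L}$ by $\tilde g_i(t)=\bar g_k(t)$ and $\tilde V_{il}(t)=\bar V_{kl}(t)$ if $i=s_k$ for some $k\in[K]$, and $\tilde g_i(t)=0$, $\tilde V_{il}(t)=0$ if $i\notin\mathcal{S}_K$. Then $(\tilde{\mathbf{g}}(t),\tilde{\mathbf{V}}(t))$ follows the gradient flow of $\mathcal{L}_N(\tilde{\mathbf{g}},\tilde{\mathbf{V}})=\Vert\mathbf{Y}-\mathbf{A}((\tilde{\mathbf{g}}^{\odot2}\mathbf{1}_L)\odot\tilde{\mathbf{V}})\Vert_F^2$, i.e., $$\frac{d}{dt}\tilde g_i(t)=-\frac{\partial\mathcal{L}_N}{\partial\tilde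 g_i}(\tilde{\mathbf g}(t),\tilde{\mathbf V}(t)),\qquad \frac{d}{dt}\tilde V_{il}(t)=-\frac{\partial\mathcal{L}_N}{\partial\tilde V_{il}}(\tilde{\mathbf g}(t),\tilde{\mathbf V}(t))$$ for all $i\in[N]$, $l\in[L]$.
   Context: $\odot$ is the entrywise product, $\mathbf{g}^{\odot2}$ the entrywise square, $\mathbf{1}_L$ the $1\times L$ all-ones row vector, so $((\mathbf g^{\odot 2}\mathbf 1_L)\odot\mathbf V)_{ij}=g_i^2V_{ij}$. Gradient flow of a loss $f$ means each coordinate's time derivative equals minus the corresponding partial derivative of $f$ along the curve. *)

theory Defs
  imports "HOL-Analysis.Analysis"
begin

text \<open>Matrices are functions nat => nat => real with explicit dimensions; indices are 0-based,
  so [N] is rendered as {..<N}.\<close>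

definition loss :: "nat \<Rightarrow> nat \<Rightarrow> nat \<Rightarrow> (nat \<Rightarrow> nat \<Rightarrow> real) \<Rightarrow> (nat \<Rightarrow> nat \<Rightarrow> real)
    \<Rightarrow> (nat \<Rightarrow> real) \<Rightarrow> (nat \<Rightarrow> nat \<Rightarrow> real) \<Rightarrow> real" where
  "loss M n L A Y g V =
     (\<Sum>m<M. \<Sum>l<L. (Y m l - (\<Sum>i<n. A m i * ((g i)\<^sup>2 * V i l)))\<^sup>2)"

definition partial_g :: "((nat \<Rightarrow> real) \<Rightarrow> (nat \<Rightarrow> nat \<Rightarrow> real) \<Rightarrow> real)
    \<Rightarrow> (nat \<Rightarrow> real) \<Rightarrow> (nat \<Rightarrow> nat \<Rightarrow> real) \<Rightarrow> nat \<Rightarrow> real" where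
  "partial_g f g V i = deriv (\<lambda>x. f (g(i := x)) V) (g i)"

definition partial_V :: "((nat \<Rightarrow> real) \<Rightarrow> (nat \<Rightarrow> nat \<Rightarrow> real) \<Rightarrow> real)
    \<Rightarrow> (nat \<Rightarrow> real) \<Rightarrow> (nat \<Rightarrow> nat \<Rightarrow> real) \<Rightarrow> nat \<Rightarrow> nat \<Rightarrow> real" where
  "partial_V f g V i l = deriv (\<lambda>x. f g (V(i := (V i)(l := x)))) (V i l)"

definition gradient_flow :: "nat \<Rightarrow> nat \<Rightarrow> ((nat \<Rightarrow> real) \<Rightarrow> (nat \<Rightarrow> nat \<Rightarrow> real) \<Rightarrow> real)
    \<Rightarrow> real set \<Rightarrow> (real \<Rightarrow> nat \<Rightarrow> real) \<Rightarrow> (real \<Rightarrow> nat \<Rightarrow> nat \<Rightarrow> real) \<Rightarrow> bool" where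
  "gradient_flow n L f T g V \<longleftrightarrow>
     (\<forall>t\<in>T.
        (\<forall>i<n. ((\<lambda>s. g s i) has_real_derivative - partial_g f (g t) (V t) i) (at t within T)) \<and>
        (\<forall>i<n. \<forall>l<L. ((\<lambda>s. V s i l) has_real_derivative - partial_V f (g t) (V t) i l)
                        (at t within T)))"

definition sel :: "nat set \<Rightarrow> nat \<Rightarrow> nat" where
  "sel S k = sorted_list_of_set S ! k"

definition submat :: "nat set \<Rightarrow> (nat \<Rightarrow> nat \<Rightarrow> real) \<Rightarrow> (nat \<Rightarrow> nat \<Rightarrow> real)" where
  "submat S A = (\<lambda>m k. A m (sel S k))"

definition embed_vec :: "nat set \<Rightarrow> (nat \<Rightarrow> real) \<Rightarrow> (nat \<Rightarrow> real)" where
  "embed_vec S g = (\<lambda>i. if \<exists>k<card S. i = sel S k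
                        then g (THE k. k < card S \<and> i = sel S k) else 0)"

definition embed_mat :: "nat set \<Rightarrow> (nat \<Rightarrow> nat \<Rightarrow> real) \<Rightarrow> (nat \<Rightarrow> nat \<Rightarrow> real)" where
  "embed_mat S V = (\<lambda>i l. if \<exists>k<card S. i = sel S k
                        then V (THE k. k < card S \<and> i = sel S k) l else 0)"

end

theory Submission
  imports Defs
begin

lemma sel_bij:
  assumes "finite S"
  shows "bij_betw (sel S) {..<card S} S"
proof -
  let ?xs = "sorted_list_of_set S"
  have d: "distinct ?xs" and st: "set ?xs = S" and ln: "length ?xs = card S"
    using assms by auto
  show ?thesis unfolding bij_betw_def
  proof
    show "inj_on (sel S) {..<card S}"
      unfolding inj_on_def sel_def using d ln by (simp add: nth_eq_iff_index_eq)
    show "sel S ` {..<card S} = S"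
      unfolding sel_def using st ln by (auto simp: set_conv_nth)
  qed
qed

lemma the_sel:
  assumes "finite S" "k < card S"
  shows "(THE k'. k' < card S \<and> sel S k = sel S k') = k"
proof (rule the_equality)
  show "k < card S \<and> sel S k = sel S k" using assms by simp
  fix k' assume "k' < card S \<and> sel S k = sel S k'"
  then show "k' = k" using sel_bij[OF assms(1)] assms(2)
    unfolding bij_betw_def inj_on_def by auto
qed

lemma embed_vec_sel:
  assumes "finite S" "k < card S"
  shows "embed_vec S g (sel S k) = g k"
  using assms the_sel[OF assms] unfolding embed_vec_def by auto

lemma embed_mat_sel:
  assumes "finite S" "k < card S"
  shows "embed_mat S V (sel S k) = V k"
  using assms the_sel[OF assms] unfolding embed_mat_def by (intro ext) auto

lemma not_sel:
  assumes "finite S" "i \<notin> S"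
  shows "\<not> (\<exists>k<card S. i = sel S k)"
  using assms sel_bij[OF assms(1)] unfolding bij_betw_def by auto

lemma embed_vec_out:
  assumes "finite S" "i \<notin> S"
  shows "embed_vec S g i = 0"
  using not_sel[OF assms] unfolding embed_vec_def by auto

lemma embed_mat_out:
  assumes "finite S" "i \<notin> S"
  shows "embed_mat S V i = (\<lambda>l. 0)"
  using not_sel[OF assms] unfolding embed_mat_def by (intro ext) auto

lemma sum_reduce:
  fixes f :: "nat \<Rightarrow> real"
  assumes "S \<subseteq> {..<N}" "\<And>i. i < N \<Longrightarrow> i \<notin> S \<Longrightarrow> f i = 0"
  shows "(\<Sum>i<N. f i) = (\<Sum>k<card S. f (sel S k))"
proof -
  have fin: "finite S" using assms(1) finite_subset by blast
  have "(\<Sum>i<N. f i) = (\<Sum>i\<in>S. f i)"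
    using assms by (intro sum.mono_neutral_right) auto
  also have "\<dots> = (\<Sum>k<card S. f (sel S k))"
    using sum.reindex_bij_betw[OF sel_bij[OF fin], of f] by simp
  finally show ?thesis .
qed

lemma loss_reduce:
  assumes "S \<subseteq> {..<N}"
    and z: "\<And>i l. i < N \<Longrightarrow> i \<notin> S \<Longrightarrow> g i = 0 \<or> V i l = 0"
  shows "loss M N L A Y g V = loss M (card S) L (submat S A) Y (\<lambda>k. g (sel S k)) (\<lambda>k. V (sel S k))"
  unfolding loss_def submat_def
proof (intro sum.cong refl)
  fix m l
  have "(\<Sum>i<N. A m i * ((g i)\<^sup>2 * V i l)) = (\<Sum>k<card S. A m (sel S k) * ((g (sel S k))\<^sup>2 * V (sel S k) l))"
    by (rule sum_reduce[OF assms(1)]) (use z in auto)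
  then show "(Y m l - (\<Sum>i<N. A m i * ((g i)\<^sup>2 * V i l)))\<^sup>2 =
    (Y m l - (\<Sum>k<card S. A m (sel S k) * ((g (sel S k))\<^sup>2 * V (sel S k) l)))\<^sup>2" by simp
qed

theorem lemmaC1:
  fixes M N L :: nat
    and A Y :: "nat \<Rightarrow> nat \<Rightarrow> real"
    and S :: "nat set"
    and T :: "real set"
    and gbar :: "real \<Rightarrow> nat \<Rightarrow> real"
    and Vbar :: "real \<Rightarrow> nat \<Rightarrow> nat \<Rightarrow> real"
  assumes "S \<subseteq> {..<N}"
    and "gradient_flow (card S) L (loss M (card S) L (submat S A) Y) T gbar Vbar"
  shows "gradient_flow N L (loss M N L A Y) T
           (\<lambda>t. embed_vec S (gbar t)) (\<lambda>t. embed_mat S (Vbar t))"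
proof -
  have fin: "finite S" using assms(1) finite_subset by blast
  let ?K = "card S"
  have Sin: "\<And>k. k < ?K \<Longrightarrow> sel S k \<in> S" using sel_bij[OF fin] unfolding bij_betw_def by auto
  have inS: "\<And>i. i \<in> S \<Longrightarrow> \<exists>k<?K. i = sel S k" using sel_bij[OF fin] unfolding bij_betw_def by auto
  have red: "loss M N L A Y (embed_vec S g) (embed_mat S V) = loss M ?K L (submat S A) Y g V" for g V
  proof -
    have "loss M N L A Y (embed_vec S g) (embed_mat S V) =
      loss M ?K L (submat S A) Y (\<lambda>k. embed_vec S g (sel S k)) (\<lambda>k. embed_mat S V (sel S k))"
      by (rule loss_reduce[OF assms(1)]) (simp add: embed_vec_out[OF fin])
    also have "\<dots> = loss M ?K L (submat S A) Y g V"
      unfolding loss_def by (intro sum.cong refl) (simp add: embed_vec_sel[OF fin] embed_mat_sel[OF fin])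
    finally show ?thesis .
  qed
  have updg: "embed_vec S (g(k := x)) = (embed_vec S g)(sel S k := x)" if "k < ?K" for g k x
  proof
    fix i show "embed_vec S (g(k := x)) i = ((embed_vec S g)(sel S k := x)) i"
    proof (cases "i \<in> S")
      case True
      then obtain k' where k': "k' < ?K" "i = sel S k'" using inS by blast
      have "sel S k' = sel S k \<longleftrightarrow> k' = k" using sel_bij[OF fin] k' that
        unfolding bij_betw_def inj_on_def by auto
      then show ?thesis using k' that by (auto simp: embed_vec_sel[OF fin])
    next
      case False
      then have "i \<noteq> sel S k" using Sin that by auto
      then show ?thesis using False by (simp add: embed_vec_out[OF fin])
    qed
  qed
  have updV: "embed_mat S (V(k := (V k)(l := x))) =
     (embed_mat S V)(sel S k := (V k)(l := x))" if "k < ?K" for V k l x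
  proof
    fix i show "embed_mat S (V(k := (V k)(l := x))) i = ((embed_mat S V)(sel S k := (V k)(l := x))) i"
    proof (cases "i \<in> S")
      case True
      then obtain k' where k': "k' < ?K" "i = sel S k'" using inS by blast
      have "sel S k' = sel S k \<longleftrightarrow> k' = k" using sel_bij[OF fin] k' that
        unfolding bij_betw_def inj_on_def by auto
      then show ?thesis using k' that by (auto simp: embed_mat_sel[OF fin])
    next
      case False
      then have "i \<noteq> sel S k" using Sin that by auto
      then show ?thesis using False by (simp add: embed_mat_out[OF fin])
    qed
  qed
  have const_g: "loss M N L A Y ((embed_vec S g)(i := x)) (embed_mat S V) = loss M ?K L (submat S A) Y g V"
    if "i \<notin> S" for g V i x
  proof -
    have "loss M N L A Y ((embed_vec S g)(i := x)) (embed_mat S V) =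
      loss M ?K L (submat S A) Y (\<lambda>k. ((embed_vec S g)(i := x)) (sel S k)) (\<lambda>k. embed_mat S V (sel S k))"
      by (rule loss_reduce[OF assms(1)]) (use that in \<open>auto simp: embed_vec_out[OF fin] embed_mat_out[OF fin]\<close>)
    also have "\<dots> = loss M ?K L (submat S A) Y g V"
    proof -
      have ne: "\<And>k. k < ?K \<Longrightarrow> sel S k \<noteq> i" using Sin that by blast
      show ?thesis unfolding loss_def
        by (intro sum.cong refl arg_cong2[where f="\<lambda>a b. (a - b)\<^sup>2"])
           (simp add: ne embed_vec_sel[OF fin] embed_mat_sel[OF fin])
    qed
    finally show ?thesis .
  qed
  have const_V: "loss M N L A Y (embed_vec S g) ((embed_mat S V)(i := (embed_mat S V i)(l := x))) = loss M ?K L (submat S A) Y g V"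
    if "i \<notin> S" for g V i l x
  proof -
    have "loss M N L A Y (embed_vec S g) ((embed_mat S V)(i := (embed_mat S V i)(l := x))) =
      loss M ?K L (submat S A) Y (\<lambda>k. embed_vec S g (sel S k)) (\<lambda>k. ((embed_mat S V)(i := (embed_mat S V i)(l := x))) (sel S k))"
      by (rule loss_reduce[OF assms(1)]) (use that in \<open>auto simp: embed_vec_out[OF fin]\<close>)
    also have "\<dots> = loss M ?K L (submat S A) Y g V"
    proof -
      have ne: "\<And>k. k < ?K \<Longrightarrow> sel S k \<noteq> i" using Sin that by blast
      show ?thesis unfolding loss_def
        by (intro sum.cong refl arg_cong2[where f="\<lambda>a b. (a - b)\<^sup>2"])
           (simp add: ne embed_vec_sel[OF fin] embed_mat_sel[OF fin])
    qed
    finally show ?thesis .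
  qed
  show ?thesis unfolding gradient_flow_def
  proof (intro ballI conjI allI impI)
    fix t i assume t: "t \<in> T" and i: "i < N"
    show "((\<lambda>s. embed_vec S (gbar s) i) has_real_derivative
        - partial_g (loss M N L A Y) (embed_vec S (gbar t)) (embed_mat S (Vbar t)) i) (at t within T)"
    proof (cases "i \<in> S")
      case True
      then obtain k where k: "k < ?K" "i = sel S k" using inS by blast
      have h: "((\<lambda>s. gbar s k) has_real_derivative
          - partial_g (loss M ?K L (submat S A) Y) (gbar t) (Vbar t) k) (at t within T)"
        using assms(2) t k unfolding gradient_flow_def by blast
      have "partial_g (loss M N L A Y) (embed_vec S (gbar t)) (embed_mat S (Vbar t)) i
          = partial_g (loss M ?K L (submat S A) Y) (gbar t) (Vbar t) k"
        unfolding partial_g_def using k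
        by (simp add: embed_vec_sel[OF fin] red flip: updg)
      then show ?thesis using h k by (simp add: embed_vec_sel[OF fin])
    next
      case False
      have "partial_g (loss M N L A Y) (embed_vec S (gbar t)) (embed_mat S (Vbar t)) i = 0"
        unfolding partial_g_def using False
        by (simp add: const_g DERIV_imp_deriv[OF DERIV_const])
      then show ?thesis using False by (simp add: embed_vec_out[OF fin])
    qed
  next
    fix t i l assume t: "t \<in> T" and i: "i < N" and l: "l < L"
    show "((\<lambda>s. embed_mat S (Vbar s) i l) has_real_derivative
        - partial_V (loss M N L A Y) (embed_vec S (gbar t)) (embed_mat S (Vbar t)) i l) (at t within T)"
    proof (cases "i \<in> S")
      case True
      then obtain k where k: "k < ?K" "i = sel S k" using inS by blast
      have h: "((\<lambda>s. Vbar s k l) has_real_derivative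
          - partial_V (loss M ?K L (submat S A) Y) (gbar t) (Vbar t) k l) (at t within T)"
        using assms(2) t k l unfolding gradient_flow_def by blast
      have "partial_V (loss M N L A Y) (embed_vec S (gbar t)) (embed_mat S (Vbar t)) i l
          = partial_V (loss M ?K L (submat S A) Y) (gbar t) (Vbar t) k l"
        unfolding partial_V_def using k
        by (simp add: embed_mat_sel[OF fin] red flip: updV)
      then show ?thesis using h k by (simp add: embed_mat_sel[OF fin])
    next
      case False
      have "partial_V (loss M N L A Y) (embed_vec S (gbar t)) (embed_mat S (Vbar t)) i l = 0"
        unfolding partial_V_def using False
        by (simp add: const_V DERIV_imp_deriv[OF DERIV_const])
      then show ?thesis using False by (simp add: embed_mat_out[OF fin])
    qed
  qed
qed

end
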